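(* Let $n\ge3$. For the $\mathrm{GL}$-orbit $O_6$, the stabilizer $H$ of a point has component group $H/H^0\cong\mathbb Z/2\mathbb Z$, while for every other $\mathrm{GL}$-orbit $O_i$ ($i\ne6$) the stabilizer of a point is connected.
   Context: Let $A,B$ be $2$-dimensional complex vector spaces with bases $a_1,a_2$ and $b_1,b_2$, $C$ an $n$-dimensional complex vector space with basis $c_1,\dots,c_n$, $V=A\otimes B\otimes C$ with the action of $\mathrm{GL}=\mathrm{GL}(A)\times\mathrm{GL}(B)\times\mathrm{GL}(C)$; write $a_ib_jc_k=a_i\otimes b_j\otimes c_k$. The $\mathrm{GL}$-orbits are $O_0,\dots,O_9$ ($O_9$ only for $n\ge4$) with representatives $O_0:0$; $O_1: a_1b_1c_1$; $O_2: a_1b_1c_1+a_2b_2c_1$; $O_3: a_1b_1c_1+a_1b_2c_2$; $O_4: a_1b_1c_1+a_2b_1c_2$; $O_5: a_1b_1c_1+a_1b_2c_2+a_2b_1c_2$; $O_6: a_1b_1c_1+a_2b_2c_2$; $O_7: a_1b_1c_1+a_1b_2c_3+a_2b_1c_2$; $O_8: a_1b_1c_1+a_1b_2c_2+a_2b_1c_2+a_2b_2c_3$; $O_9: a_1b_1c_1+a_1b_2c_3+a_2b_1c_2+a_2b_2c_4$. $H^0$ denotes the identity component of $H$. *)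

theory Defs
  imports "HOL-Analysis.Analysis" "HOL-Algebra.Elementary_Groups"
begin

text \<open>Tensors in V = A (x) B (x) C, with dim A = dim B = 2 and dim C = CARD('n),
  represented by their coordinate arrays with respect to the bases
  a_1,a_2 (indices 0,1 :: 2), b_1,b_2 (indices 0,1 :: 2) and a basis of C indexed by 'n.\<close>

type_synonym 'n tensor = "2 \<Rightarrow> 2 \<Rightarrow> 'n \<Rightarrow> complex"

type_synonym 'n glelem = "(complex^2^2) \<times> (complex^2^2) \<times> (complex^'n^'n)"

definition GLset :: "'n::finite glelem set" where
  "GLset = {(g, h, k). invertible g \<and> invertible h \<and> invertible k}"

definition act :: "'n::finite glelem \<Rightarrow> 'n tensor \<Rightarrow> 'n tensor" where
  "act x T = (case x of (g, h, k) \<Rightarrow>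
     (\<lambda>i j l. \<Sum>i'\<in>UNIV. \<Sum>j'\<in>UNIV. \<Sum>l'\<in>UNIV.
        g $ i $ i' * h $ j $ j' * k $ l $ l' * T i' j' l'))"

definition GL_orbit :: "'n::finite tensor \<Rightarrow> 'n tensor set" where
  "GL_orbit T = {act x T | x. x \<in> GLset}"

definition stab :: "'n::finite tensor \<Rightarrow> 'n glelem set" where
  "stab T = {x \<in> GLset. act x T = T}"

definition stab_group :: "'n::finite tensor \<Rightarrow> 'n glelem monoid" where
  "stab_group T = \<lparr> carrier = stab T,
     mult = (\<lambda>(g, h, k) (g', h', k'). (g ** g', h ** h', k ** k')),
     one = (mat 1, mat 1, mat 1) \<rparr>"

definition identity_component :: "'n::finite glelem set \<Rightarrow> 'n glelem set" where
  "identity_component H = connected_component_set H (mat 1, mat 1, mat 1)"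

text \<open>Sum of the distinct pure tensors a_i b_j c_l for (i,j,l) in the given list
  (a_1,a_2 \<mapsto> 0,1; b_1,b_2 \<mapsto> 0,1; c_l \<mapsto> c l).\<close>
definition sum_pure :: "(2 \<times> 2 \<times> 'n) list \<Rightarrow> 'n tensor" where
  "sum_pure l = (\<lambda>x y z. if (x, y, z) \<in> set l then 1 else 0)"

text \<open>Orbit representatives O_0,...,O_9; c enumerates the basis c_1,...,c_n of C.\<close>
definition rep :: "(nat \<Rightarrow> 'n) \<Rightarrow> nat \<Rightarrow> 'n tensor" where
  "rep c m = sum_pure
    (if m = 0 then []
     else if m = 1 then [(0, 0, c 1)]
     else if m = 2 then [(0, 0, c 1), (1, 1, c 1)]
     else if m = 3 then [(0, 0, c 1), (0, 1, c 2)]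
     else if m = 4 then [(0, 0, c 1), (1, 0, c 2)]
     else if m = 5 then [(0, 0, c 1), (0, 1, c 2), (1, 0, c 2)]
     else if m = 6 then [(0, 0, c 1), (1, 1, c 2)]
     else if m = 7 then [(0, 0, c 1), (0, 1, c 3), (1, 0, c 2)]
     else if m = 8 then [(0, 0, c 1), (0, 1, c 2), (1, 0, c 2), (1, 1, c 3)]
     else [(0, 0, c 1), (0, 1, c 3), (1, 0, c 2), (1, 1, c 4)])"

end

theory Submission
  imports Defs "HOL-Computational_Algebra.Polynomial"
begin


lemma ex2: "(i::2) = 0 \<or> i = 1"
proof -
  have "(2::2) = 0" by simp
  then show ?thesis using exhaust_2[of i] by metis
qed
lemma UNIV2: "(UNIV::2 set) = {0,1}"
  using ex2 by auto
lemma two_neq[simp]: "(0::2) \<noteq> 1" "(1::2) \<noteq> 0" by simp_all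
lemma sum2: "sum f (UNIV::2 set) = f 0 + f 1" by (simp add: UNIV2)
lemma all2: "(\<forall>i::2. P i) \<longleftrightarrow> P 0 \<and> P 1" using ex2 by metis
lemma det2: "det (A::complex^2^2) = A$0$0 * A$1$1 - A$0$1 * A$1$0"
proof -
  have e: "(2::2) = 0" by simp
  show ?thesis unfolding det_2 e by (simp add: mult.commute)
qed
lemma sum_mat1: "(\<Sum>j\<in>UNIV. (mat 1 :: 'a::comm_ring_1^'m^'m)$i$j * f j) = f i"
proof -
  have "(\<Sum>j\<in>UNIV. (mat 1 :: 'a::comm_ring_1^'m^'m)$i$j * f j) = (\<Sum>j\<in>UNIV. if i = j then f j else 0)"
    by (rule sum.cong) (auto simp: mat_def)
  then show ?thesis by simp
qed

definition tA :: "complex^2^2 \<Rightarrow> 'n tensor \<Rightarrow> 'n tensor" where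
  "tA g T = (\<lambda>i j l. \<Sum>i'\<in>UNIV. g$i$i' * T i' j l)"
definition tB :: "complex^2^2 \<Rightarrow> 'n tensor \<Rightarrow> 'n tensor" where
  "tB h T = (\<lambda>i j l. \<Sum>j'\<in>UNIV. h$j$j' * T i j' l)"
definition tC :: "complex^'n^'n \<Rightarrow> 'n::finite tensor \<Rightarrow> 'n tensor" where
  "tC k T = (\<lambda>i j l. \<Sum>l'\<in>UNIV. k$l$l' * T i j l')"

lemma act_factor: "act (g,h,k) T = tA g (tB h (tC k T))"
  unfolding act_def tA_def tB_def tC_def 
  by (simp add: sum_distrib_left mult.assoc)

lemma tA_tB: "tA g (tB h T) = tB h (tA g T)"
  unfolding tA_def tB_def
  apply (intro ext) apply (simp add: sum_distrib_left mult.left_commute)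
  by (rule sum.swap)

lemma tA_tC: "tA g (tC k T) = tC k (tA g T)"
  unfolding tA_def tC_def
  apply (intro ext) apply (simp add: sum_distrib_left mult.left_commute)
  by (rule sum.swap)

lemma tB_tC: "tB g (tC k T) = tC k (tB g T)"
  unfolding tB_def tC_def
  apply (intro ext) apply (simp add: sum_distrib_left mult.left_commute)
  by (rule sum.swap)

lemma tA_mult: "tA (g ** g') T = tA g (tA g' T)"
  unfolding tA_def matrix_matrix_mult_def
  apply (intro ext) apply (simp add: sum_distrib_left sum_distrib_right mult.assoc)
  by (rule sum.swap)

lemma tB_mult: "tB (g ** g') T = tB g (tB g' T)"
  unfolding tB_def matrix_matrix_mult_def
  apply (intro ext) apply (simp add: sum_distrib_left sum_distrib_right mult.assoc)
  by (rule sum.swap)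

lemma tC_mult: "tC (g ** g') T = tC g (tC g' T)"
  unfolding tC_def matrix_matrix_mult_def
  apply (intro ext) apply (simp add: sum_distrib_left sum_distrib_right mult.assoc)
  by (rule sum.swap)

lemma tA_one[simp]: "tA (mat 1) T = T"
  by (simp add: tA_def sum_mat1)
lemma tB_one[simp]: "tB (mat 1) T = T"
  by (simp add: tB_def sum_mat1)
lemma tC_one[simp]: "tC (mat 1) T = T"
  by (simp add: tC_def sum_mat1)

lemma act_mult: "act (g ** g', h ** h', k ** k') T = act (g,h,k) (act (g',h',k') T)"
  by (simp add: act_factor tA_mult tB_mult tC_mult tA_tB tA_tC tB_tC)

lemma act_one[simp]: "act (mat 1, mat 1, mat 1) T = T"
  by (simp add: act_factor)

definition inv2 :: "complex^2^2 \<Rightarrow> complex^2^2" where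
 "inv2 m = (\<chi> i j. (if i = 0 then (if j = 0 then m$1$1 else - m$0$1)
                     else (if j = 0 then - m$1$0 else m$0$0)) / det m)"

lemma inv2_entries[simp]: "inv2 m $0$0 = m$1$1/det m" "inv2 m $0$1 = - m$0$1/det m"
   "inv2 m$1$0 = - m$1$0/det m" "inv2 m $1$1 = m$0$0/det m"
  by (simp_all add: inv2_def)

lemma mat_eq2: "(A::'a^2^2) = B \<longleftrightarrow> A$0$0 = B$0$0 \<and> A$0$1 = B$0$1 \<and> A$1$0 = B$1$0 \<and> A$1$1 = B$1$1"
  by (auto simp add: vec_eq_iff all2)

lemma mult2_entries: "((A::complex^2^2) ** (B::complex^2^2)) $ i $ j = A$i$0 * B$0$j + A$i$1 * B$1$j"
  by (simp add: matrix_matrix_mult_def sum2)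

lemma mat1_entries[simp]: "(mat 1 :: complex^2^2)$0$0 = 1" "(mat 1 :: complex^2^2)$0$1 = 0"
  "(mat 1 :: complex^2^2)$1$0 = 0" "(mat 1 :: complex^2^2)$1$1 = 1"
  by (simp_all add: mat_def)

lemma inv2_left: "det m \<noteq> 0 \<Longrightarrow> inv2 m ** m = mat 1"
  by (simp add: mat_eq2 mult2_entries divide_simps) (simp add: det2 algebra_simps)
lemma inv2_right: "det m \<noteq> 0 \<Longrightarrow> m ** inv2 m = mat 1"
  by (simp add: mat_eq2 mult2_entries divide_simps) (simp add: det2 algebra_simps)
lemma det_inv2: "det m \<noteq> 0 \<Longrightarrow> det (inv2 m) = 1 / det m"
proof -
  assume d: "det m \<noteq> 0"
  have e: "m$1$1 * m$0$0 - m$0$1 * m$1$0 = det m" by (simp add: det2 algebra_simps)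
  have "det (inv2 m) = (m$1$1 * m$0$0 - m$0$1 * m$1$0) / (det m * det m)"
    by (subst det2) (simp add: divide_simps d)
  also have "\<dots> = 1 / det m" using d by (simp only: e) simp
  finally show ?thesis .
qed
lemma inv2_inv2: "det m \<noteq> 0 \<Longrightarrow> inv2 (inv2 m) = m"
  by (simp add: mat_eq2 det_inv2)
lemma inv2_one[simp]: "inv2 (mat 1) = mat 1"
  by (simp add: mat_eq2 det2)

lemma minv: "invertible A \<Longrightarrow> A ** matrix_inv A = mat 1 \<and> matrix_inv A ** A = mat 1"
  unfolding matrix_inv_def invertible_def by (rule someI_ex)

lemma invertible_minv: "invertible A \<Longrightarrow> invertible (matrix_inv A)"
  using minv unfolding invertible_def by blast

section \<open>Polynomial functions of one complex variable\<close>

definition ispoly :: "(complex \<Rightarrow> complex) \<Rightarrow> bool" where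
  "ispoly f \<longleftrightarrow> (\<exists>p. \<forall>z. f z = poly p z)"

lemma ispoly_const[simp,intro]: "ispoly (\<lambda>z. c)"
  unfolding ispoly_def by (rule exI[of _ "[:c:]"]) simp
lemma ispoly_id[simp,intro]: "ispoly (\<lambda>z. z)"
  unfolding ispoly_def by (rule exI[of _ "[:0,1:]"]) simp
lemma ispoly_add[intro]: "ispoly f \<Longrightarrow> ispoly g \<Longrightarrow> ispoly (\<lambda>z. f z + g z)"
  unfolding ispoly_def by (metis poly_add)
lemma ispoly_diff[intro]: "ispoly f \<Longrightarrow> ispoly g \<Longrightarrow> ispoly (\<lambda>z. f z - g z)"
  unfolding ispoly_def by (metis poly_diff)
lemma ispoly_mult[intro]: "ispoly f \<Longrightarrow> ispoly g \<Longrightarrow> ispoly (\<lambda>z. f z * g z)"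
  unfolding ispoly_def by (metis poly_mult)
lemma ispoly_minus[intro]: "ispoly f \<Longrightarrow> ispoly (\<lambda>z. - f z)"
  unfolding ispoly_def by (metis poly_minus)
lemma ispoly_sum[intro]: "(\<And>i. i \<in> A \<Longrightarrow> ispoly (f i)) \<Longrightarrow> ispoly (\<lambda>z. \<Sum>i\<in>A. f i z)"
proof -
  assume "\<And>i. i \<in> A \<Longrightarrow> ispoly (f i)"
  then obtain P where P: "\<forall>i\<in>A. \<forall>z. f i z = poly (P i) z"
    unfolding ispoly_def by metis
  show ?thesis unfolding ispoly_def
    by (rule exI[of _ "\<Sum>i\<in>A. P i"]) (simp add: poly_sum P)
qed
lemma ispoly_prod[intro]: "(\<And>i. i \<in> A \<Longrightarrow> ispoly (f i)) \<Longrightarrow> ispoly (\<lambda>z. \<Prod>i\<in>A. f i z)"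
proof -
  assume "\<And>i. i \<in> A \<Longrightarrow> ispoly (f i)"
  then obtain P where P: "\<forall>i\<in>A. \<forall>z. f i z = poly (P i) z"
    unfolding ispoly_def by metis
  show ?thesis unfolding ispoly_def
    by (rule exI[of _ "\<Prod>i\<in>A. P i"]) (simp add: poly_prod P)
qed
lemma ispoly_if[intro]: "ispoly f \<Longrightarrow> ispoly g \<Longrightarrow> ispoly (\<lambda>z. if b then f z else g z)"
  by (cases b) auto

lemma ispoly_det:
  fixes M :: "complex \<Rightarrow> complex^'m::finite^'m"
  assumes "\<And>i j. ispoly (\<lambda>z. M z $ i $ j)"
  shows "ispoly (\<lambda>z. det (M z))"
  unfolding det_def
  apply (rule ispoly_sum)
  apply (rule ispoly_mult[OF ispoly_const])
  apply (rule ispoly_prod)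
  by (rule assms)

lemma ispoly_roots: "ispoly f \<Longrightarrow> f 0 \<noteq> 0 \<Longrightarrow> finite {z. f z = 0}"
proof -
  assume "ispoly f" "f 0 \<noteq> 0"
  then obtain p where p: "\<And>z. f z = poly p z" unfolding ispoly_def by blast
  have "p \<noteq> 0" using p \<open>f 0 \<noteq> 0\<close> by auto
  then show ?thesis using poly_roots_finite[of p] by (simp add: p)
qed

lemma ispoly_cont: "ispoly f \<Longrightarrow> continuous_on S f"
proof -
  assume "ispoly f"
  then obtain p where p: "\<And>z. f z = poly p z" unfolding ispoly_def by blast
  have "f = (\<lambda>z. poly p z)" using p by auto
  then show ?thesis by (simp add: continuous_on_poly[OF continuous_on_id])
qed

section \<open>Connectedness via algebraic curves\<close>

lemma conn_compl_finite: "finite (F::complex set) \<Longrightarrow> connected (- F)"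
proof -
  assume F: "finite F"
  have "connected (UNIV - F :: complex set)"
    by (rule connected_open_diff_countable) (simp_all add: countable_finite F connected_UNIV)
  then show ?thesis by (simp add: Compl_eq_Diff_UNIV)
qed

lemma conn_curves:
  fixes X :: "'a::topological_space set"
  assumes "e \<in> X"
    and "\<And>x. x \<in> X \<Longrightarrow> \<exists>(\<gamma>::complex \<Rightarrow> 'a) F. finite F \<and> 0 \<notin> F \<and> 1 \<notin> F \<and> continuous_on (- F) \<gamma>
            \<and> \<gamma> 0 = e \<and> \<gamma> 1 = x \<and> \<gamma> ` (- F) \<subseteq> X"
  shows "connected X"
proof -
  have cc: "connected_component X e x" if xX: "x \<in> X" for x
  proof -
    obtain \<gamma> :: "complex \<Rightarrow> 'a" and F :: "complex set" where F: "finite F" "0 \<notin> F" "1 \<notin> F" "continuous_on (- F) \<gamma>"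
      "\<gamma> 0 = e" "\<gamma> 1 = x" "\<gamma> ` (- F) \<subseteq> X"
      using assms(2)[OF xX] by blast
    have c: "connected (- F :: complex set)" by (rule conn_compl_finite[OF F(1)])
    have "connected (\<gamma> ` (- F))" by (rule connected_continuous_image[OF F(4) c])
    moreover have "e \<in> \<gamma> ` (- F)"
      using F(2,5) by (intro rev_image_eqI[of 0]) auto
    moreover have "x \<in> \<gamma> ` (- F)"
      using F(3,6) by (intro rev_image_eqI[of 1]) auto
    ultimately show ?thesis unfolding connected_component_def using F(7) by (intro exI[of _ "\<gamma> ` (- F)"]) simp
  qed
  have "connected_component_set X e = X"
  proof
    show "connected_component_set X e \<subseteq> X" by (rule connected_component_subset)
    show "X \<subseteq> connected_component_set X e" using cc by (auto simp: mem_Collect_eq)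
  qed
  then show ?thesis using connected_connected_component[of X e] by simp
qed



lemma GLset_iff[simp]: "(g,h,k) \<in> GLset \<longleftrightarrow> det g \<noteq> 0 \<and> det h \<noteq> 0 \<and> det k \<noteq> 0"
  by (simp add: GLset_def invertible_det_nz)

lemma stab_iff3[simp]: "(g,h,k) \<in> stab T \<longleftrightarrow> det g \<noteq> 0 \<and> det h \<noteq> 0 \<and> det k \<noteq> 0 \<and> act (g,h,k) T = T"
  by (simp add: stab_def)

lemma tAB_cancel1: "det g \<noteq> 0 \<Longrightarrow> det h \<noteq> 0 \<Longrightarrow> tA (inv2 g) (tB (inv2 h) (tA g (tB h X))) = X"
  by (simp add: tA_tB tA_mult[symmetric] tB_mult[symmetric] inv2_left)

lemma tAB_cancel2: "det g \<noteq> 0 \<Longrightarrow> det h \<noteq> 0 \<Longrightarrow> tA g (tB h (tA (inv2 g) (tB (inv2 h) X))) = X"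
  by (simp add: tA_tB tA_mult[symmetric] tB_mult[symmetric] inv2_right)

lemma stab_iff:
  assumes "det g \<noteq> 0" "det h \<noteq> 0"
  shows "act (g,h,k) T = T \<longleftrightarrow> tC k T = tA (inv2 g) (tB (inv2 h) T)"
proof
  assume "act (g,h,k) T = T"
  then have "tA (inv2 g) (tB (inv2 h) (tA g (tB h (tC k T)))) = tA (inv2 g) (tB (inv2 h) T)"
    by (simp add: act_factor)
  then show "tC k T = tA (inv2 g) (tB (inv2 h) T)" by (simp add: tAB_cancel1[OF assms])
next
  assume "tC k T = tA (inv2 g) (tB (inv2 h) T)"
  then show "act (g,h,k) T = T" by (simp add: act_factor tAB_cancel2[OF assms])
qed

definition good :: "'n::finite tensor \<Rightarrow> 'n set \<Rightarrow> ('n \<Rightarrow> 2 \<times> 2) \<Rightarrow> bool" where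
  "good T S rp \<longleftrightarrow> (\<forall>l'\<in>S. \<forall>l''\<in>S. T (fst (rp l')) (snd (rp l')) l'' = (if l'' = l' then 1 else 0))
     \<and> (\<forall>i j l. l \<notin> S \<longrightarrow> T i j l = 0)"

definition Pp :: "'n::finite tensor \<Rightarrow> 'n set \<Rightarrow> ('n \<Rightarrow> 2 \<times> 2) \<Rightarrow> complex^2^2 \<Rightarrow> complex^2^2 \<Rightarrow> bool" where
  "Pp T S rp u v \<longleftrightarrow> (\<forall>i j l. (\<Sum>l'\<in>S. tA u (tB v T) (fst (rp l')) (snd (rp l')) l * T i j l')
      = tA u (tB v T) i j l)"

definition sig :: "'n::finite tensor \<Rightarrow> 'n set \<Rightarrow> ('n \<Rightarrow> 2 \<times> 2) \<Rightarrow> complex^2^2 \<Rightarrow> complex^2^2 \<Rightarrow> complex^'n^'n" where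
  "sig T S rp u v = (\<chi> l l'. if l' \<in> S then tA u (tB v T) (fst (rp l')) (snd (rp l')) l
                              else (if l = l' then 1 else 0))"

lemma sum_restrict_S:
  fixes T :: "'n::finite tensor"
  assumes "good T S rp"
  shows "(\<Sum>l'\<in>UNIV. f l' * T i j l') = (\<Sum>l'\<in>S. f l' * T i j l')"
proof -
  show ?thesis
    by (rule sum.mono_neutral_right) (use assms in \<open>auto simp: good_def\<close>)
qed

lemma sig_A2:
  fixes T :: "'n::finite tensor"
  assumes g: "good T S rp" and P: "Pp T S rp u v"
  shows "tC (sig T S rp u v) T = tA u (tB v T)"
proof (intro ext)
  fix i j l
  have "tC (sig T S rp u v) T i j l = (\<Sum>l'\<in>S. sig T S rp u v $ l $ l' * T i j l')"
    unfolding tC_def by (rule sum_restrict_S[OF g])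
  also have "\<dots> = (\<Sum>l'\<in>S. tA u (tB v T) (fst (rp l')) (snd (rp l')) l * T i j l')"
    by (rule sum.cong) (auto simp: sig_def)
  also have "\<dots> = tA u (tB v T) i j l" using P unfolding Pp_def by blast
  finally show "tC (sig T S rp u v) T i j l = tA u (tB v T) i j l" .
qed

lemma sig_A1:
  fixes T :: "'n::finite tensor"
  assumes g: "good T S rp" and K: "tC k T = tA u (tB v T)"
  shows "Pp T S rp u v"
  unfolding Pp_def
proof (intro allI)
  fix i j l
  have K': "\<And>a b c. tA u (tB v T) a b c = (\<Sum>l''\<in>UNIV. k$c$l'' * T a b l'')"
  proof -
    fix a b c
    have "tC k T a b c = tA u (tB v T) a b c" using K by simp
    then show "tA u (tB v T) a b c = (\<Sum>l''\<in>UNIV. k$c$l'' * T a b l'')" unfolding tC_def by simp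
  qed
  have rpv: "tA u (tB v T) (fst (rp l')) (snd (rp l')) l = k$l$l'" if "l' \<in> S" for l'
  proof -
    have "tA u (tB v T) (fst (rp l')) (snd (rp l')) l = (\<Sum>l''\<in>UNIV. k$l$l'' * T (fst (rp l')) (snd (rp l')) l'')"
      by (rule K')
    also have "\<dots> = (\<Sum>l''\<in>S. k$l$l'' * T (fst (rp l')) (snd (rp l')) l'')"
      by (rule sum_restrict_S[OF g])
    also have "\<dots> = (\<Sum>l''\<in>S. if l'' = l' then k$l$l'' else 0)"
      using g that unfolding good_def by (intro sum.cong) auto
    also have "\<dots> = k$l$l'" using that by (simp add: sum.delta')
    finally show ?thesis .
  qed
  have "(\<Sum>l'\<in>S. tA u (tB v T) (fst (rp l')) (snd (rp l')) l * T i j l') = (\<Sum>l'\<in>S. k$l$l' * T i j l')"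
    by (rule sum.cong) (auto simp: rpv)
  also have "\<dots> = (\<Sum>l'\<in>UNIV. k$l$l' * T i j l')" by (rule sum_restrict_S[OF g, symmetric])
  also have "\<dots> = tA u (tB v T) i j l" by (rule K'[symmetric])
  finally show "(\<Sum>l'\<in>S. tA u (tB v T) (fst (rp l')) (snd (rp l')) l * T i j l') = tA u (tB v T) i j l" .
qed

lemma sig_A3:
  fixes T :: "'n::finite tensor"
  assumes g: "good T S rp"
  shows "sig T S rp (mat 1) (mat 1) = mat 1"
proof -
  have "sig T S rp (mat 1) (mat 1) = (\<chi> l l'. if l' \<in> S then T (fst (rp l')) (snd (rp l')) l
                              else (if l = l' then 1 else 0))" unfolding sig_def tA_one tB_one ..
  also have "\<dots> = mat 1"
    unfolding vec_eq_iff mat_def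
  proof (intro allI)
    fix l l' :: 'n
    show "(\<chi> l l'. if l' \<in> S then T (fst (rp l')) (snd (rp l')) l else (if l = l' then 1 else 0)) $ l $ l' =
          (\<chi> i j. if i = j then 1 else 0) $ l $ l'"
      using g unfolding good_def by (cases "l \<in> S"; cases "l' \<in> S") auto
  qed
  finally show ?thesis .
qed

lemma ispoly_tAB:
  assumes "\<And>i j. ispoly (\<lambda>z. U z $ i $ j)" "\<And>i j. ispoly (\<lambda>z. V z $ i $ j)"
  shows "ispoly (\<lambda>z. tA (U z) (tB (V z) T) i j l)"
  unfolding tA_def tB_def
  by (intro ispoly_sum ispoly_mult ispoly_const assms)

lemma ispoly_sig:
  assumes "\<And>i j. ispoly (\<lambda>z. U z $ i $ j)" "\<And>i j. ispoly (\<lambda>z. V z $ i $ j)"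
  shows "ispoly (\<lambda>z. sig T S rp (U z) (V z) $ a $ b)"
proof -
  have e: "sig T S rp (U z) (V z) $ a $ b = (if b \<in> S then tA (U z) (tB (V z) T) (fst (rp b)) (snd (rp b)) a
                              else (if a = b then 1 else 0))" for z by (simp add: sig_def)
  show ?thesis unfolding e by (intro ispoly_if ispoly_tAB assms ispoly_const)
qed

lemma cont_mat:
  assumes "\<And>i j. continuous_on S (\<lambda>z. f z i j)"
  shows "continuous_on S (\<lambda>z. (\<chi> i j. f z i j) :: 'a::real_normed_vector^'m^'k)"
  by (intro continuous_on_vec_lambda assms)

lemma cont_mat_poly:
  assumes "\<And>i j. ispoly (\<lambda>z. K z $ i $ j)"
  shows "continuous_on S K"
proof -
  have "K = (\<lambda>z. \<chi> i j. K z $ i $ j)" by (simp add: vec_eq_iff)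
  moreover have "continuous_on S (\<lambda>z. \<chi> i j. K z $ i $ j)"
    by (intro cont_mat ispoly_cont assms)
  ultimately show ?thesis by simp
qed

lemma cont_inv2:
  assumes "\<And>i j. ispoly (\<lambda>z. U z $ i $ j)" "\<And>z. z \<in> S \<Longrightarrow> det (U z) \<noteq> 0"
  shows "continuous_on S (\<lambda>z. inv2 (U z))"
  unfolding inv2_def
proof (intro cont_mat continuous_on_divide)
  fix i j :: 2
  show "continuous_on S (\<lambda>z. det (U z))"
    by (rule ispoly_cont, rule ispoly_det, rule assms)
  show "continuous_on S (\<lambda>z. if i = 0 then if j = 0 then U z $ 1 $ 1 else - U z $ 0 $ 1
          else if j = 0 then - U z $ 1 $ 0 else U z $ 0 $ 0)"
    by (rule ispoly_cont) (intro ispoly_if ispoly_minus assms(1))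
qed (use assms(2) in auto)




lemma stab_conn_generic:
  fixes T :: "'n::finite tensor"
  assumes g: "good T S rp"
    and Q1: "Q (mat 1) (mat 1)"
    and path: "\<And>u v. det u \<noteq> 0 \<Longrightarrow> det v \<noteq> 0 \<Longrightarrow> Pp T S rp u v \<Longrightarrow> Q u v \<Longrightarrow>
       \<exists>U V. (\<forall>i j. ispoly (\<lambda>z. U z $i$j)) \<and> (\<forall>i j. ispoly (\<lambda>z. V z $i$j)) \<and> U 0 = mat 1
           \<and> V 0 = mat 1 \<and> U 1 = u \<and> V 1 = v \<and> (\<forall>z. Pp T S rp (U z) (V z) \<and> Q (U z) (V z))"
  shows "connected {x \<in> stab T. Q (inv2 (fst x)) (inv2 (fst (snd x)))}"
proof (rule conn_curves[where e = "(mat 1, mat 1, mat 1)"])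
  show "(mat 1, mat 1, mat 1) \<in> {x \<in> stab T. Q (inv2 (fst x)) (inv2 (fst (snd x)))}"
    using Q1 by simp
next
  fix x assume xX: "x \<in> {x \<in> stab T. Q (inv2 (fst x)) (inv2 (fst (snd x)))}"
  obtain g h k where x: "x = (g,h,k)" by (cases x) auto
  have dg: "det g \<noteq> 0" and dh: "det h \<noteq> 0" and dk: "det k \<noteq> 0" and ax: "act (g,h,k) T = T"
    and Qx: "Q (inv2 g) (inv2 h)" using xX x by auto
  define u where "u = inv2 g"
  define v where "v = inv2 h"
  have du: "det u \<noteq> 0" using dg by (simp add: u_def det_inv2)
  have dv: "det v \<noteq> 0" using dh by (simp add: v_def det_inv2)
  have Kx: "tC k T = tA u (tB v T)" using stab_iff[OF dg dh, of k T] ax unfolding u_def v_def by blast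
  have Pu: "Pp T S rp u v" by (rule sig_A1[OF g Kx])
  have Qu: "Q u v" using Qx by (simp add: u_def v_def)
  obtain U V where UV: "\<forall>i j. ispoly (\<lambda>z. U z $i$j)" "\<forall>i j. ispoly (\<lambda>z. V z $i$j)"
    "U 0 = mat 1" "V 0 = mat 1" "U 1 = u" "V 1 = v" "\<forall>z. Pp T S rp (U z) (V z) \<and> Q (U z) (V z)"
    using path[OF du dv Pu Qu] by blast
  define s1 where "s1 = sig T S rp u v"
  define K where "K = (\<lambda>z. (\<chi> a b. sig T S rp (U z) (V z) $ a $ b + z * (k$a$b - s1$a$b)) :: complex^'n^'n)"
  have polyK: "ispoly (\<lambda>z. K z $ a $ b)" for a b
  proof -
    have "ispoly (\<lambda>z. sig T S rp (U z) (V z) $ a $ b)"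
      by (rule ispoly_sig) (use UV in auto)
    then show ?thesis unfolding K_def by (simp add: ispoly_add ispoly_mult ispoly_id ispoly_const)
  qed
  define f where "f = (\<lambda>z. det (U z) * det (V z) * det (K z))"
  have pf: "ispoly f" unfolding f_def
    by (intro ispoly_mult ispoly_det) (use UV polyK in auto)
  have K0: "K 0 = mat 1"
  proof -
    have "K 0 = sig T S rp (U 0) (V 0)" by (simp add: K_def vec_eq_iff)
    then show ?thesis using sig_A3[OF g] UV(3,4) by simp
  qed
  have K1: "K 1 = k" by (simp add: K_def vec_eq_iff UV s1_def)
  have f0: "f 0 \<noteq> 0" by (simp add: f_def K0 UV)
  have f1: "f 1 \<noteq> 0" by (simp add: f_def K1 UV du dv dk)
  define F where "F = {z. f z = 0}"
  have finF: "finite F" using ispoly_roots[OF pf f0] by (simp add: F_def)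
  have nz: "det (U z) \<noteq> 0 \<and> det (V z) \<noteq> 0 \<and> det (K z) \<noteq> 0" if "z \<notin> F" for z
    using that by (simp add: F_def f_def)
  define \<gamma> where "\<gamma> = (\<lambda>z. (inv2 (U z), inv2 (V z), K z))"
  show "\<exists>(\<gamma>::complex \<Rightarrow> _) F. finite F \<and> 0 \<notin> F \<and> 1 \<notin> F \<and> continuous_on (- F) \<gamma>
            \<and> \<gamma> 0 = (mat 1, mat 1, mat 1) \<and> \<gamma> 1 = x
            \<and> \<gamma> ` (- F) \<subseteq> {x \<in> stab T. Q (inv2 (fst x)) (inv2 (fst (snd x)))}"
  proof (intro exI conjI)
    show "finite F" by (rule finF)
    show "0 \<notin> F" using f0 by (simp add: F_def)
    show "1 \<notin> F" using f1 by (simp add: F_def)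
    have c1: "continuous_on (- F) (\<lambda>z. inv2 (U z))"
      by (rule cont_inv2) (use UV nz in auto)
    have c2: "continuous_on (- F) (\<lambda>z. inv2 (V z))"
      by (rule cont_inv2) (use UV nz in auto)
    have c3: "continuous_on (- F) K"
      by (rule cont_mat_poly) (rule polyK)
    show "continuous_on (- F) \<gamma>" unfolding \<gamma>_def
      by (intro continuous_on_Pair c1 c2 c3)
    show "\<gamma> 0 = (mat 1, mat 1, mat 1)" by (simp add: \<gamma>_def UV K0)
    show "\<gamma> 1 = x" by (simp add: \<gamma>_def UV K1 x u_def v_def inv2_inv2 dg dh)
    show "\<gamma> ` (- F) \<subseteq> {x \<in> stab T. Q (inv2 (fst x)) (inv2 (fst (snd x)))}"
    proof
      fix y assume "y \<in> \<gamma> ` (- F)"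
      then obtain z where z: "z \<notin> F" "y = \<gamma> z" by auto
      have d: "det (U z) \<noteq> 0" "det (V z) \<noteq> 0" "det (K z) \<noteq> 0" using nz[OF z(1)] by auto
      have PQ: "Pp T S rp (U z) (V z)" "Q (U z) (V z)" using UV(7) by auto
      have eq: "tC (K z) T = tA (U z) (tB (V z) T)"
      proof (intro ext)
        fix i j l
        have "tC (K z) T i j l = tC (sig T S rp (U z) (V z)) T i j l + z * (tC k T i j l - tC s1 T i j l)"
          unfolding K_def tC_def
          by (simp add: algebra_simps sum.distrib sum_subtractf sum_distrib_left)
        also have "\<dots> = tA (U z) (tB (V z) T) i j l"
          using sig_A2[OF g PQ(1)] sig_A2[OF g Pu] Kx by (simp add: s1_def)
        finally show "tC (K z) T i j l = tA (U z) (tB (V z) T) i j l" .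
      qed
      have di: "det (inv2 (U z)) \<noteq> 0" "det (inv2 (V z)) \<noteq> 0" using d by (simp_all add: det_inv2)
      have "act (inv2 (U z), inv2 (V z), K z) T = T \<longleftrightarrow>
         tC (K z) T = tA (inv2 (inv2 (U z))) (tB (inv2 (inv2 (V z))) T)" by (rule stab_iff[OF di])
      then have "act (inv2 (U z), inv2 (V z), K z) T = T"
        using eq by (simp add: inv2_inv2 d)
      then show "y \<in> {x \<in> stab T. Q (inv2 (fst x)) (inv2 (fst (snd x)))}"
        using z(2) d di PQ by (simp add: \<gamma>_def inv2_inv2)
    qed
  qed
qed




lemma tAB_eval: "tA u (tB v T) i j l = u$i$0 * (v$j$0 * T 0 0 l + v$j$1 * T 0 1 l) + u$i$1 * (v$j$0 * T 1 0 l + v$j$1 * T 1 1 l)"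
  by (simp add: tA_def tB_def sum2)

lemma Pp_red:
  fixes T :: "'n::finite tensor"
  assumes g: "good T S rp"
  shows "Pp T S rp u v \<longleftrightarrow> (\<forall>l\<in>S. \<forall>i j. (\<Sum>l'\<in>S. tA u (tB v T) (fst (rp l')) (snd (rp l')) l * T i j l') = tA u (tB v T) i j l)"
proof -
  have z: "tA u (tB v T) a b l = 0" if "l \<notin> S" for a b l
    using g that unfolding good_def by (simp add: tAB_eval)
  show ?thesis unfolding Pp_def
  proof (intro iffI allI)
    fix i j l
    assume H: "\<forall>l\<in>S. \<forall>i j. (\<Sum>l'\<in>S. tA u (tB v T) (fst (rp l')) (snd (rp l')) l * T i j l') = tA u (tB v T) i j l"
    show "(\<Sum>l'\<in>S. tA u (tB v T) (fst (rp l')) (snd (rp l')) l * T i j l') = tA u (tB v T) i j l"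
    proof (cases "l \<in> S")
      case True then show ?thesis using H by blast
    next
      case False then show ?thesis using z by simp
    qed
  qed auto
qed

definition lin :: "complex^2^2 \<Rightarrow> complex \<Rightarrow> complex^2^2" where
  "lin u z = (\<chi> a b. (1 - z) * mat 1 $ a $ b + z * u $ a $ b)"

lemma lin_entries[simp]: "lin u z $ 0 $ 0 = 1 - z + z * u$0$0" "lin u z $ 0 $ 1 = z * u$0$1"
  "lin u z $ 1 $ 0 = z * u$1$0" "lin u z $ 1 $ 1 = 1 - z + z * u$1$1"
  by (simp_all add: lin_def)
lemma lin_0[simp]: "lin u 0 = mat 1" by (simp add: mat_eq2)
lemma lin_1[simp]: "lin u 1 = u" by (simp add: mat_eq2)
lemma lin_poly: "ispoly (\<lambda>z. lin u z $ i $ j)"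
  unfolding lin_def by (simp add: ispoly_add ispoly_mult ispoly_diff ispoly_id ispoly_const)

lemma sum_pure_eval: "sum_pure L a b l = (if (a,b,l) \<in> set L then 1 else 0)"
  by (simp add: sum_pure_def)

lemma conn_O0:
  shows "connected (stab (sum_pure [] :: 'n::finite tensor))"
proof -
  define T where "T = (sum_pure [] :: 'n tensor)"
  have g: "good T {} (\<lambda>_. (0,0))"
    by (simp add: good_def sum_pure_eval T_def)
  have PP: "Pp T {} (\<lambda>_. (0,0)) u v" for u v
    unfolding Pp_red[OF g] by simp
  have "connected {x \<in> stab T. (\<lambda>_ _. True) (inv2 (fst x)) (inv2 (fst (snd x)))}"
  proof (rule stab_conn_generic[OF g])
    fix u v :: "complex^2^2"
    show "\<exists>U V. (\<forall>i j. ispoly (\<lambda>z. U z $i$j)) \<and> (\<forall>i j. ispoly (\<lambda>z. V z $i$j)) \<and> U 0 = mat 1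
           \<and> V 0 = mat 1 \<and> U 1 = u \<and> V 1 = v \<and> (\<forall>z. Pp T {} (\<lambda>_. (0,0)) (U z) (V z) \<and> True)"
      apply (rule exI[of _ "lin u"], rule exI[of _ "lin v"])
      by (simp add: lin_poly PP)
  qed simp
  then show ?thesis by (simp add: T_def)
qed

lemma conn_O1:
  fixes p :: "'n::finite"
  shows "connected (stab (sum_pure [(0,0,p)] :: 'n tensor))"
proof -
  define T where "T = (sum_pure [(0,0,p)] :: 'n tensor)"
  have g: "good T {p} (\<lambda>_. (0,0))"
    by (simp add: good_def sum_pure_eval T_def)
  have PP: "Pp T {p} (\<lambda>_. (0,0)) u v \<longleftrightarrow> u$0$0 * v$1$0 = 0 \<and> u$1$0 * v$0$0 = 0 \<and> u$1$0 * v$1$0 = 0" for u v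
    unfolding Pp_red[OF g] by (auto simp add: T_def tAB_eval sum_pure_eval all2)
  have "connected {x \<in> stab T. (\<lambda>_ _. True) (inv2 (fst x)) (inv2 (fst (snd x)))}"
  proof (rule stab_conn_generic[OF g])
    fix u v :: "complex^2^2"
    assume du: "det u \<noteq> 0" and dv: "det v \<noteq> 0" and P: "Pp T {p} (\<lambda>_. (0,0)) u v"
    have u10: "u$1$0 = 0" using P du dv unfolding PP by (auto simp: det2)
    have v10: "v$1$0 = 0" using P du dv u10 unfolding PP by (auto simp: det2)
    show "\<exists>U V. (\<forall>i j. ispoly (\<lambda>z. U z $i$j)) \<and> (\<forall>i j. ispoly (\<lambda>z. V z $i$j)) \<and> U 0 = mat 1
           \<and> V 0 = mat 1 \<and> U 1 = u \<and> V 1 = v \<and> (\<forall>z. Pp T {p} (\<lambda>_. (0,0)) (U z) (V z) \<and> True)"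
      apply (rule exI[of _ "lin u"], rule exI[of _ "lin v"])
      by (simp add: lin_poly PP u10 v10)
  qed simp
  then show ?thesis by (simp add: T_def)
qed




definition mk2 :: "complex \<Rightarrow> complex \<Rightarrow> complex \<Rightarrow> complex \<Rightarrow> complex^2^2" where
  "mk2 a b c d = (\<chi> i j. if i = 0 then (if j = 0 then a else b) else (if j = 0 then c else d))"

lemma mk2_entries[simp]: "mk2 a b c d $ 0 $ 0 = a" "mk2 a b c d $ 0 $ 1 = b"
  "mk2 a b c d $ 1 $ 0 = c" "mk2 a b c d $ 1 $ 1 = d"
  by (simp_all add: mk2_def)

lemma ispoly_mk2:
  assumes "ispoly a" "ispoly b" "ispoly c" "ispoly d"
  shows "ispoly (\<lambda>z. mk2 (a z) (b z) (c z) (d z) $ i $ j)"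
  unfolding mk2_def using assms by (simp add: ispoly_if)

lemma ispoly_lin_e: "ispoly (\<lambda>z. lin u z $ i $ j)" by (rule lin_poly)

lemmas lin_polys = ispoly_lin_e[of _ 0 0] ispoly_lin_e[of _ 0 1] ispoly_lin_e[of _ 1 0] ispoly_lin_e[of _ 1 1]

lemma conn_O2:
  fixes p :: "'n::finite"
  shows "connected (stab (sum_pure [(0,0,p),(1,1,p)] :: 'n tensor))"
proof -
  define T where "T = (sum_pure [(0,0,p),(1,1,p)] :: 'n tensor)"
  define rp :: "'n \<Rightarrow> 2 \<times> 2" where "rp = (\<lambda>_. (0,0))"
  have g: "good T {p} rp"
    by (simp add: good_def sum_pure_eval T_def rp_def)
  have PP: "Pp T {p} rp u v \<longleftrightarrow> u$1$0 * v$0$0 + u$1$1 * v$0$1 = 0 \<and> u$0$0 * v$1$0 + u$0$1 * v$1$1 = 0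
      \<and> u$0$0 * v$0$0 + u$0$1 * v$0$1 = u$1$0 * v$1$0 + u$1$1 * v$1$1" for u v
    unfolding Pp_red[OF g] by (auto simp add: T_def tAB_eval sum_pure_eval all2 rp_def)
  have "connected {x \<in> stab T. (\<lambda>_ _. True) (inv2 (fst x)) (inv2 (fst (snd x)))}"
  proof (rule stab_conn_generic[OF g])
    fix u v :: "complex^2^2"
    assume du: "det u \<noteq> 0" and dv: "det v \<noteq> 0" and P: "Pp T {p} rp u v"
    have e: "u$1$0 * v$0$0 + u$1$1 * v$0$1 = 0" "u$0$0 * v$1$0 + u$0$1 * v$1$1 = 0"
      "u$0$0 * v$0$0 + u$0$1 * v$0$1 = u$1$0 * v$1$0 + u$1$1 * v$1$1" using P unfolding PP by auto
    define lam where "lam = u$0$0 * v$0$0 + u$0$1 * v$0$1"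
    define mu where "mu = lam / det u"
    have dd: "det u = u$0$0 * u$1$1 - u$0$1 * u$1$0" by (rule det2)
    have v1: "v$0$0 * det u = lam * u$1$1" "v$0$1 * det u = - lam * u$1$0"
      "v$1$0 * det u = - lam * u$0$1" "v$1$1 * det u = lam * u$0$0"
      unfolding dd lam_def using e by algebra+
    have vv: "v = mk2 (mu * u$1$1) (- mu * u$1$0) (- mu * u$0$1) (mu * u$0$0)"
      unfolding mat_eq2 mk2_entries mu_def using v1 du by (simp_all add: field_simps)
    define V where "V = (\<lambda>z. mk2 ((1 - z + z * mu) * lin u z $1$1) (- (1 - z + z * mu) * lin u z $1$0)
                               (- (1 - z + z * mu) * lin u z $0$1) ((1 - z + z * mu) * lin u z $0$0))"
    show "\<exists>U V. (\<forall>i j. ispoly (\<lambda>z. U z $i$j)) \<and> (\<forall>i j. ispoly (\<lambda>z. V z $i$j)) \<and> U 0 = mat 1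
           \<and> V 0 = mat 1 \<and> U 1 = u \<and> V 1 = v \<and> (\<forall>z. Pp T {p} rp (U z) (V z) \<and> True)"
    proof (rule exI[of _ "lin u"], rule exI[of _ V], intro conjI allI)
      fix i j
      show "ispoly (\<lambda>z. lin u z $ i $ j)" by (rule lin_poly)
      show "ispoly (\<lambda>z. V z $ i $ j)" unfolding V_def
        by (intro ispoly_mk2 ispoly_mult ispoly_minus ispoly_add ispoly_diff ispoly_const ispoly_id lin_poly)
    next
      show "V 0 = mat 1" by (simp add: V_def mat_eq2)
      show "V 1 = v" by (simp add: V_def vv)
    next
      fix z
      show "Pp T {p} rp (lin u z) (V z)" unfolding PP V_def mk2_entries
        by (simp add: algebra_simps)
    qed simp_all
  qed simp
  then show ?thesis by (simp add: T_def)
qed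


lemma conn_O3:
  fixes p q :: "'n::finite"
  assumes pq: "p \<noteq> q"
  shows "connected (stab (sum_pure [(0,0,p),(0,1,q)] :: 'n tensor))"
proof -
  define T where "T = (sum_pure [(0,0,p),(0,1,q)] :: 'n tensor)"
  define rp :: "'n \<Rightarrow> 2 \<times> 2" where "rp = (\<lambda>l. if l = p then (0,0) else (0,1))"
  have g: "good T {p,q} rp"
    using pq by (auto simp add: good_def sum_pure_eval T_def rp_def)
  have PP: "Pp T {p,q} rp u v \<longleftrightarrow> u$1$0 * v$0$0 = 0 \<and> u$1$0 * v$1$0 = 0 \<and> u$1$0 * v$0$1 = 0 \<and> u$1$0 * v$1$1 = 0" for u v
    unfolding Pp_red[OF g] using pq by (auto simp add: T_def tAB_eval sum_pure_eval all2 rp_def)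
  have "connected {x \<in> stab T. (\<lambda>_ _. True) (inv2 (fst x)) (inv2 (fst (snd x)))}"
  proof (rule stab_conn_generic[OF g])
    fix u v :: "complex^2^2"
    assume du: "det u \<noteq> 0" and dv: "det v \<noteq> 0" and P: "Pp T {p,q} rp u v"
    have u10: "u$1$0 = 0" using P dv unfolding PP by (cases "u$1$0 = 0") (auto simp: det2)
    show "\<exists>U V. (\<forall>i j. ispoly (\<lambda>z. U z $i$j)) \<and> (\<forall>i j. ispoly (\<lambda>z. V z $i$j)) \<and> U 0 = mat 1
           \<and> V 0 = mat 1 \<and> U 1 = u \<and> V 1 = v \<and> (\<forall>z. Pp T {p,q} rp (U z) (V z) \<and> True)"
      apply (rule exI[of _ "lin u"], rule exI[of _ "lin v"])
      by (simp add: lin_poly PP u10)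
  qed simp
  then show ?thesis by (simp add: T_def)
qed

lemma conn_O4:
  fixes p q :: "'n::finite"
  assumes pq: "p \<noteq> q"
  shows "connected (stab (sum_pure [(0,0,p),(1,0,q)] :: 'n tensor))"
proof -
  define T where "T = (sum_pure [(0,0,p),(1,0,q)] :: 'n tensor)"
  define rp :: "'n \<Rightarrow> 2 \<times> 2" where "rp = (\<lambda>l. if l = p then (0,0) else (1,0))"
  have g: "good T {p,q} rp"
    using pq by (auto simp add: good_def sum_pure_eval T_def rp_def)
  have PP: "Pp T {p,q} rp u v \<longleftrightarrow> u$0$0 * v$1$0 = 0 \<and> u$1$0 * v$1$0 = 0 \<and> u$0$1 * v$1$0 = 0 \<and> u$1$1 * v$1$0 = 0" for u v
    unfolding Pp_red[OF g] using pq by (auto simp add: T_def tAB_eval sum_pure_eval all2 rp_def)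
  have "connected {x \<in> stab T. (\<lambda>_ _. True) (inv2 (fst x)) (inv2 (fst (snd x)))}"
  proof (rule stab_conn_generic[OF g])
    fix u v :: "complex^2^2"
    assume du: "det u \<noteq> 0" and dv: "det v \<noteq> 0" and P: "Pp T {p,q} rp u v"
    have v10: "v$1$0 = 0" using P du unfolding PP by (cases "v$1$0 = 0") (auto simp: det2)
    show "\<exists>U V. (\<forall>i j. ispoly (\<lambda>z. U z $i$j)) \<and> (\<forall>i j. ispoly (\<lambda>z. V z $i$j)) \<and> U 0 = mat 1
           \<and> V 0 = mat 1 \<and> U 1 = u \<and> V 1 = v \<and> (\<forall>z. Pp T {p,q} rp (U z) (V z) \<and> True)"
      apply (rule exI[of _ "lin u"], rule exI[of _ "lin v"])
      by (simp add: lin_poly PP v10)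
  qed simp
  then show ?thesis by (simp add: T_def)
qed

lemma conn_O5:
  fixes p q :: "'n::finite"
  assumes pq: "p \<noteq> q"
  shows "connected (stab (sum_pure [(0,0,p),(0,1,q),(1,0,q)] :: 'n tensor))"
proof -
  define T where "T = (sum_pure [(0,0,p),(0,1,q),(1,0,q)] :: 'n tensor)"
  define rp :: "'n \<Rightarrow> 2 \<times> 2" where "rp = (\<lambda>l. if l = p then (0,0) else (0,1))"
  have g: "good T {p,q} rp"
    using pq by (auto simp add: good_def sum_pure_eval T_def rp_def)
  have PP: "Pp T {p,q} rp u v \<longleftrightarrow> u$0$0 * v$1$0 = u$1$0 * v$0$0 \<and> u$1$0 * v$1$0 = 0
      \<and> u$0$0 * v$1$1 + u$0$1 * v$1$0 = u$1$0 * v$0$1 + u$1$1 * v$0$0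
      \<and> u$1$0 * v$1$1 + u$1$1 * v$1$0 = 0" for u v
    unfolding Pp_red[OF g] using pq by (auto simp add: T_def tAB_eval sum_pure_eval all2 rp_def)
  have "connected {x \<in> stab T. (\<lambda>_ _. True) (inv2 (fst x)) (inv2 (fst (snd x)))}"
  proof (rule stab_conn_generic[OF g])
    fix u v :: "complex^2^2"
    assume du: "det u \<noteq> 0" and dv: "det v \<noteq> 0" and P: "Pp T {p,q} rp u v"
    have e: "u$0$0 * v$1$0 = u$1$0 * v$0$0" "u$1$0 * v$1$0 = 0"
      "u$0$0 * v$1$1 + u$0$1 * v$1$0 = u$1$0 * v$0$1 + u$1$1 * v$0$0"
      using P unfolding PP by auto
    have u10: "u$1$0 = 0"
    proof (rule ccontr)
      assume "u$1$0 \<noteq> 0"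
      then have "v$1$0 = 0" "v$0$0 = 0" using e(1,2) by auto
      then show False using dv by (simp add: det2)
    qed
    have u00: "u$0$0 \<noteq> 0" using du u10 by (auto simp: det2)
    have v10: "v$1$0 = 0" using e(1) u10 u00 by simp
    have e3: "u$0$0 * v$1$1 = u$1$1 * v$0$0" using e(3) u10 v10 by (simp add: mult.commute)
    define lam where "lam = v$0$0 / u$0$0"
    define V where "V = (\<lambda>z. mk2 ((1 - z + z * lam) * lin u z $0$0) (z * v$0$1) 0 ((1 - z + z * lam) * lin u z $1$1))"
    have v00: "v$0$0 = lam * u$0$0" using u00 by (simp add: lam_def)
    have v11: "v$1$1 = lam * u$1$1" using u00 e3 by (simp add: lam_def field_simps)
    show "\<exists>U V. (\<forall>i j. ispoly (\<lambda>z. U z $i$j)) \<and> (\<forall>i j. ispoly (\<lambda>z. V z $i$j)) \<and> U 0 = mat 1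
           \<and> V 0 = mat 1 \<and> U 1 = u \<and> V 1 = v \<and> (\<forall>z. Pp T {p,q} rp (U z) (V z) \<and> True)"
    proof (rule exI[of _ "lin u"], rule exI[of _ V], intro conjI allI)
      fix i j
      show "ispoly (\<lambda>z. lin u z $ i $ j)" by (rule lin_poly)
      show "ispoly (\<lambda>z. V z $ i $ j)" unfolding V_def
        by (intro ispoly_mk2 ispoly_mult ispoly_minus ispoly_add ispoly_diff ispoly_const ispoly_id lin_poly)
    next
      show "V 0 = mat 1" by (simp add: V_def mat_eq2)
      show "V 1 = v" by (simp add: V_def mat_eq2 v00 v11 v10)
    next
      fix z
      show "Pp T {p,q} rp (lin u z) (V z)" unfolding PP V_def mk2_entries
        by (simp add: algebra_simps u10)
    qed simp_all
  qed simp
  then show ?thesis by (simp add: T_def)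
qed

lemma conn_O7:
  fixes p q r :: "'n::finite"
  assumes d: "p \<noteq> q" "p \<noteq> r" "q \<noteq> r"
  shows "connected (stab (sum_pure [(0,0,p),(0,1,r),(1,0,q)] :: 'n tensor))"
proof -
  define T where "T = (sum_pure [(0,0,p),(0,1,r),(1,0,q)] :: 'n tensor)"
  define rp :: "'n \<Rightarrow> 2 \<times> 2" where "rp = (\<lambda>l. if l = p then (0,0) else if l = q then (1,0) else (0,1))"
  have g: "good T {p,q,r} rp"
    using d by (auto simp add: good_def sum_pure_eval T_def rp_def)
  have PP: "Pp T {p,q,r} rp u v \<longleftrightarrow> u$1$0 * v$1$0 = 0 \<and> u$1$1 * v$1$0 = 0 \<and> u$1$0 * v$1$1 = 0" for u v
    unfolding Pp_red[OF g] using d by (auto simp add: T_def tAB_eval sum_pure_eval all2 rp_def)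
  have "connected {x \<in> stab T. (\<lambda>_ _. True) (inv2 (fst x)) (inv2 (fst (snd x)))}"
  proof (rule stab_conn_generic[OF g])
    fix u v :: "complex^2^2"
    assume du: "det u \<noteq> 0" and dv: "det v \<noteq> 0" and P: "Pp T {p,q,r} rp u v"
    have v10: "v$1$0 = 0" using P du unfolding PP by (cases "v$1$0 = 0") (auto simp: det2)
    have u10: "u$1$0 = 0" using P dv v10 unfolding PP by (cases "u$1$0 = 0") (auto simp: det2)
    show "\<exists>U V. (\<forall>i j. ispoly (\<lambda>z. U z $i$j)) \<and> (\<forall>i j. ispoly (\<lambda>z. V z $i$j)) \<and> U 0 = mat 1
           \<and> V 0 = mat 1 \<and> U 1 = u \<and> V 1 = v \<and> (\<forall>z. Pp T {p,q,r} rp (U z) (V z) \<and> True)"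
      apply (rule exI[of _ "lin u"], rule exI[of _ "lin v"])
      by (simp add: lin_poly PP u10 v10)
  qed simp
  then show ?thesis by (simp add: T_def)
qed

lemma conn_O8:
  fixes p q r :: "'n::finite"
  assumes d: "p \<noteq> q" "p \<noteq> r" "q \<noteq> r"
  shows "connected (stab (sum_pure [(0,0,p),(0,1,q),(1,0,q),(1,1,r)] :: 'n tensor))"
proof -
  define T where "T = (sum_pure [(0,0,p),(0,1,q),(1,0,q),(1,1,r)] :: 'n tensor)"
  define rp :: "'n \<Rightarrow> 2 \<times> 2" where "rp = (\<lambda>l. if l = p then (0,0) else if l = q then (0,1) else (1,1))"
  have g: "good T {p,q,r} rp"
    using d by (auto simp add: good_def sum_pure_eval T_def rp_def)
  have PP: "Pp T {p,q,r} rp u v \<longleftrightarrow> u$0$0 * v$1$0 = u$1$0 * v$0$0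
      \<and> u$0$0 * v$1$1 + u$0$1 * v$1$0 = u$1$0 * v$0$1 + u$1$1 * v$0$0
      \<and> u$0$1 * v$1$1 = u$1$1 * v$0$1" for u v
    unfolding Pp_red[OF g] using d by (auto simp add: T_def tAB_eval sum_pure_eval all2 rp_def)
  have "connected {x \<in> stab T. (\<lambda>_ _. True) (inv2 (fst x)) (inv2 (fst (snd x)))}"
  proof (rule stab_conn_generic[OF g])
    fix u v :: "complex^2^2"
    assume du: "det u \<noteq> 0" and dv: "det v \<noteq> 0" and P: "Pp T {p,q,r} rp u v"
    have e: "u$0$0 * v$1$0 = u$1$0 * v$0$0"
      "u$0$0 * v$1$1 + u$0$1 * v$1$0 = u$1$0 * v$0$1 + u$1$1 * v$0$0"
      "u$0$1 * v$1$1 = u$1$1 * v$0$1" using P unfolding PP by auto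
    have dd: "det u = u$0$0 * u$1$1 - u$0$1 * u$1$0" by (rule det2)
    define lam where "lam = (v$0$0 * u$1$1 - v$1$0 * u$0$1) / det u"
    have w: "v$0$0 * det u = (v$0$0 * u$1$1 - v$1$0 * u$0$1) * u$0$0"
      "v$0$1 * det u = (v$0$0 * u$1$1 - v$1$0 * u$0$1) * u$0$1"
      "v$1$0 * det u = (v$0$0 * u$1$1 - v$1$0 * u$0$1) * u$1$0"
      "v$1$1 * det u = (v$0$0 * u$1$1 - v$1$0 * u$0$1) * u$1$1"
      unfolding dd using e by algebra+
    have vv: "v$i$j = lam * u$i$j" if "i = 0 \<or> i = 1" "j = 0 \<or> j = 1" for i j :: 2
      using that w du by (auto simp: lam_def field_simps)
    define V where "V = (\<lambda>z. mk2 ((1 - z + z * lam) * lin u z $0$0) ((1 - z + z * lam) * lin u z $0$1)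
                       ((1 - z + z * lam) * lin u z $1$0) ((1 - z + z * lam) * lin u z $1$1))"
    show "\<exists>U V. (\<forall>i j. ispoly (\<lambda>z. U z $i$j)) \<and> (\<forall>i j. ispoly (\<lambda>z. V z $i$j)) \<and> U 0 = mat 1
           \<and> V 0 = mat 1 \<and> U 1 = u \<and> V 1 = v \<and> (\<forall>z. Pp T {p,q,r} rp (U z) (V z) \<and> True)"
    proof (rule exI[of _ "lin u"], rule exI[of _ V], intro conjI allI)
      fix i j
      show "ispoly (\<lambda>z. lin u z $ i $ j)" by (rule lin_poly)
      show "ispoly (\<lambda>z. V z $ i $ j)" unfolding V_def
        by (intro ispoly_mk2 ispoly_mult ispoly_minus ispoly_add ispoly_diff ispoly_const ispoly_id lin_poly)
    next
      show "V 0 = mat 1" by (simp add: V_def mat_eq2)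
      show "V 1 = v" by (simp add: V_def mat_eq2 vv)
    next
      fix z
      show "Pp T {p,q,r} rp (lin u z) (V z)" unfolding PP V_def mk2_entries
        by (simp add: algebra_simps)
    qed simp_all
  qed simp
  then show ?thesis by (simp add: T_def)
qed

lemma conn_O9:
  fixes p q r s :: "'n::finite"
  assumes d: "p \<noteq> q" "p \<noteq> r" "q \<noteq> r" "p \<noteq> s" "q \<noteq> s" "r \<noteq> s"
  shows "connected (stab (sum_pure [(0,0,p),(0,1,r),(1,0,q),(1,1,s)] :: 'n tensor))"
proof -
  define T where "T = (sum_pure [(0,0,p),(0,1,r),(1,0,q),(1,1,s)] :: 'n tensor)"
  define rp :: "'n \<Rightarrow> 2 \<times> 2" where "rp = (\<lambda>l. if l = p then (0,0) else if l = q then (1,0) else if l = r then (0,1) else (1,1))"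
  have g: "good T {p,q,r,s} rp"
    using d by (auto simp add: good_def sum_pure_eval T_def rp_def)
  have PP: "Pp T {p,q,r,s} rp u v" for u v
    unfolding Pp_red[OF g] using d by (auto simp add: T_def tAB_eval sum_pure_eval all2 rp_def)
  have "connected {x \<in> stab T. (\<lambda>_ _. True) (inv2 (fst x)) (inv2 (fst (snd x)))}"
  proof (rule stab_conn_generic[OF g])
    fix u v :: "complex^2^2"
    show "\<exists>U V. (\<forall>i j. ispoly (\<lambda>z. U z $i$j)) \<and> (\<forall>i j. ispoly (\<lambda>z. V z $i$j)) \<and> U 0 = mat 1
           \<and> V 0 = mat 1 \<and> U 1 = u \<and> V 1 = v \<and> (\<forall>z. Pp T {p,q,r,s} rp (U z) (V z) \<and> True)"
      apply (rule exI[of _ "lin u"], rule exI[of _ "lin v"])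
      by (simp add: lin_poly PP)
  qed simp
  then show ?thesis by (simp add: T_def)
qed




section \<open>Case O_6\<close>

definition Qd :: "complex^2^2 \<Rightarrow> complex^2^2 \<Rightarrow> bool" where
  "Qd u v \<longleftrightarrow> u$0$1 = 0 \<and> u$1$0 = 0 \<and> v$0$1 = 0 \<and> v$1$0 = 0"

definition rp6 :: "'n \<Rightarrow> 'n \<Rightarrow> 'n \<Rightarrow> 2 \<times> 2" where
  "rp6 p q = (\<lambda>l. if l = p then (0,0) else (1,1))"

lemma good6:
  fixes p q :: "'n::finite"
  assumes pq: "p \<noteq> q"
  shows "good (sum_pure [(0,0,p),(1,1,q)] :: 'n tensor) {p,q} (rp6 p q)"
  using pq by (auto simp add: good_def sum_pure_eval rp6_def)

lemma PP6:
  fixes p q :: "'n::finite"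
  assumes pq: "p \<noteq> q"
  shows "Pp (sum_pure [(0,0,p),(1,1,q)] :: 'n tensor) {p,q} (rp6 p q) u v \<longleftrightarrow>
     u$0$0 * v$1$0 = 0 \<and> u$1$0 * v$0$0 = 0 \<and> u$0$1 * v$1$1 = 0 \<and> u$1$1 * v$0$1 = 0"
  unfolding Pp_red[OF good6[OF pq]] using pq by (auto simp add: tAB_eval sum_pure_eval all2 rp6_def)

lemma conn_O6d:
  fixes p q :: "'n::finite"
  assumes pq: "p \<noteq> q"
  shows "connected {x \<in> stab (sum_pure [(0,0,p),(1,1,q)] :: 'n tensor). Qd (inv2 (fst x)) (inv2 (fst (snd x)))}"
proof (rule stab_conn_generic[OF good6[OF pq]])
  show "Qd (mat 1) (mat 1)" by (simp add: Qd_def)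
next
  fix u v :: "complex^2^2"
  assume Q: "Qd u v"
  show "\<exists>U V. (\<forall>i j. ispoly (\<lambda>z. U z $i$j)) \<and> (\<forall>i j. ispoly (\<lambda>z. V z $i$j)) \<and> U 0 = mat 1
           \<and> V 0 = mat 1 \<and> U 1 = u \<and> V 1 = v \<and> (\<forall>z. Pp (sum_pure [(0,0,p),(1,1,q)]) {p,q} (rp6 p q) (U z) (V z) \<and> Qd (U z) (V z))"
    apply (rule exI[of _ "lin u"], rule exI[of _ "lin v"])
    using Q by (simp add: lin_poly PP6[OF pq] Qd_def)
qed

lemma O6_uv:
  fixes u v :: "complex^2^2"
  assumes du: "det u \<noteq> 0" and dv: "det v \<noteq> 0"
    and e: "u$0$0 * v$1$0 = 0" "u$1$0 * v$0$0 = 0" "u$0$1 * v$1$1 = 0" "u$1$1 * v$0$1 = 0"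
  shows "(u$0$1 = 0 \<and> u$1$0 = 0 \<and> v$0$1 = 0 \<and> v$1$0 = 0) \<or> (u$0$0 = 0 \<and> u$1$1 = 0 \<and> v$0$0 = 0 \<and> v$1$1 = 0)"
proof (cases "u$0$0 = 0")
  case False
  then have v10: "v$1$0 = 0" using e(1) by auto
  then have "v$0$0 \<noteq> 0" "v$1$1 \<noteq> 0" using dv by (auto simp: det2)
  then have u: "u$1$0 = 0" "u$0$1 = 0" using e(2,3) by auto
  then have "u$1$1 \<noteq> 0" using du by (auto simp: det2)
  then have "v$0$1 = 0" using e(4) by auto
  then show ?thesis using u v10 by simp
next
  case True
  then have "u$0$1 \<noteq> 0" "u$1$0 \<noteq> 0" using du by (auto simp: det2)
  then have v: "v$0$0 = 0" "v$1$1 = 0" using e(2,3) by auto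
  then have "v$0$1 \<noteq> 0" using dv by (auto simp: det2)
  then have "u$1$1 = 0" using e(4) by auto
  then show ?thesis using True v by simp
qed

lemma O6_types:
  fixes p q :: "'n::finite"
  assumes pq: "p \<noteq> q" and x: "(g,h,k) \<in> stab (sum_pure [(0,0,p),(1,1,q)] :: 'n tensor)"
  shows "(g$0$1 = 0 \<and> g$1$0 = 0 \<and> h$0$1 = 0 \<and> h$1$0 = 0 \<and> Qd (inv2 g) (inv2 h))
       \<or> (g$0$0 = 0 \<and> g$1$1 = 0 \<and> h$0$0 = 0 \<and> h$1$1 = 0 \<and> \<not> Qd (inv2 g) (inv2 h))"
proof -
  define T where "T = (sum_pure [(0,0,p),(1,1,q)] :: 'n tensor)"
  have dg: "det g \<noteq> 0" and dh: "det h \<noteq> 0" and ax: "act (g,h,k) T = T" using x by (auto simp: T_def)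
  have K: "tC k T = tA (inv2 g) (tB (inv2 h) T)" using stab_iff[OF dg dh, of k T] ax by blast
  have P: "Pp T {p,q} (rp6 p q) (inv2 g) (inv2 h)" using sig_A1[OF good6[OF pq] K[unfolded T_def]] by (simp add: T_def)
  have du: "det (inv2 g) \<noteq> 0" "det (inv2 h) \<noteq> 0" using dg dh by (simp_all add: det_inv2)
  from O6_uv[OF du] P[unfolded T_def PP6[OF pq]]
  have "((inv2 g)$0$1 = 0 \<and> (inv2 g)$1$0 = 0 \<and> (inv2 h)$0$1 = 0 \<and> (inv2 h)$1$0 = 0) \<or>
        ((inv2 g)$0$0 = 0 \<and> (inv2 g)$1$1 = 0 \<and> (inv2 h)$0$0 = 0 \<and> (inv2 h)$1$1 = 0)" by blast
  then show ?thesis using dg dh by (auto simp: Qd_def det2)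
qed

definition swp :: "'n \<Rightarrow> 'n \<Rightarrow> 'n \<Rightarrow> 'n" where
  "swp p q i = (if i = p then q else if i = q then p else i)"

definition kswap :: "'n::finite \<Rightarrow> 'n \<Rightarrow> complex^'n^'n" where
  "kswap p q = (\<chi> i j. if j = swp p q i then 1 else 0)"

lemma swp_swp[simp]: "swp p q (swp p q i) = i"
  by (simp add: swp_def)

lemma kswap_sq:
  fixes p q :: "'n::finite"
  shows "kswap p q ** kswap p q = mat 1"
proof -
  have "(kswap p q ** kswap p q) $ i $ j = (mat 1 :: complex^'n^'n) $ i $ j" for i j
  proof -
    have "(kswap p q ** kswap p q) $ i $ j = (\<Sum>m\<in>UNIV. if m = swp p q i then (if j = swp p q m then 1 else 0) else 0)"
      unfolding matrix_matrix_mult_def kswap_def vec_lambda_beta by (intro sum.cong) auto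
    also have "\<dots> = (if j = i then 1 else 0)" by simp
    finally show ?thesis by (simp add: mat_def eq_commute)
  qed
  then show ?thesis by (simp add: vec_eq_iff)
qed

lemma det_kswap: "det (kswap p q) \<noteq> 0"
proof -
  have "det (kswap p q) * det (kswap p q) = 1" using kswap_sq[of p q] det_mul by (metis det_I)
  then show ?thesis by auto
qed

lemma tC_kswap: "tC (kswap p q) T = (\<lambda>i j l. T i j (swp p q l))"
proof (intro ext)
  fix i j l
  have "tC (kswap p q) T i j l = (\<Sum>l'\<in>UNIV. if l' = swp p q l then T i j l' else 0)"
    unfolding tC_def kswap_def by (intro sum.cong) auto
  then show "tC (kswap p q) T i j l = T i j (swp p q l)" by simp
qed

lemma swap_in_stab6:
  fixes p q :: "'n::finite"
  assumes pq: "p \<noteq> q"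
  shows "(mk2 0 1 1 0, mk2 0 1 1 0, kswap p q) \<in> stab (sum_pure [(0,0,p),(1,1,q)] :: 'n tensor)"
proof -
  have "act (mk2 0 1 1 0, mk2 0 1 1 0, kswap p q) (sum_pure [(0,0,p),(1,1,q)] :: 'n tensor) = sum_pure [(0,0,p),(1,1,q)]"
  proof (intro ext)
    fix i j :: 2 and l :: 'n
    show "act (mk2 0 1 1 0, mk2 0 1 1 0, kswap p q) (sum_pure [(0,0,p),(1,1,q)] :: 'n tensor) i j l = sum_pure [(0,0,p),(1,1,q)] i j l"
      unfolding act_factor tC_kswap tAB_eval
      using ex2[of i] ex2[of j] pq by (auto simp: sum_pure_eval swp_def)
  qed
  then show ?thesis by (simp add: det_kswap det2)
qed




section \<open>Transport along the orbit\<close>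

definition conjy :: "'n::finite glelem \<Rightarrow> 'n glelem \<Rightarrow> 'n glelem" where
  "conjy y x = (case y of (a,b,c) \<Rightarrow> case x of (g,h,k) \<Rightarrow>
     (a ** g ** matrix_inv a, b ** h ** matrix_inv b, c ** k ** matrix_inv c))"

definition unconjy :: "'n::finite glelem \<Rightarrow> 'n glelem \<Rightarrow> 'n glelem" where
  "unconjy y x = (case y of (a,b,c) \<Rightarrow> case x of (g,h,k) \<Rightarrow>
     (matrix_inv a ** g ** a, matrix_inv b ** h ** b, matrix_inv c ** k ** c))"

lemma inv_l: "invertible (a::'a::field^'m^'m) \<Longrightarrow> matrix_inv a ** a = mat 1"
  using minv by blast
lemma inv_r: "invertible (a::'a::field^'m^'m) \<Longrightarrow> a ** matrix_inv a = mat 1"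
  using minv by blast

lemma conj_cancel1:
  fixes a g :: "'a::field^'m^'m"
  assumes "invertible a"
  shows "a ** (matrix_inv a ** g ** a) ** matrix_inv a = g"
proof -
  have "a ** (matrix_inv a ** g ** a) ** matrix_inv a = (a ** matrix_inv a) ** g ** (a ** matrix_inv a)"
    by (simp add: matrix_mul_assoc)
  then show ?thesis using inv_r[OF assms] by simp
qed

lemma conj_cancel2:
  fixes a g :: "'a::field^'m^'m"
  assumes "invertible a"
  shows "matrix_inv a ** (a ** g ** matrix_inv a) ** a = g"
proof -
  have "matrix_inv a ** (a ** g ** matrix_inv a) ** a = (matrix_inv a ** a) ** g ** (matrix_inv a ** a)"
    by (simp add: matrix_mul_assoc)
  then show ?thesis using inv_l[OF assms] by simp
qed

lemma conj_mult:
  fixes a g g' :: "'a::field^'m^'m"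
  assumes "invertible a"
  shows "matrix_inv a ** (g ** g') ** a = (matrix_inv a ** g ** a) ** (matrix_inv a ** g' ** a)"
proof -
  have "(matrix_inv a ** g ** a) ** (matrix_inv a ** g' ** a) = matrix_inv a ** g ** (a ** matrix_inv a) ** g' ** a"
    by (simp add: matrix_mul_assoc)
  then show ?thesis using inv_r[OF assms] by (simp add: matrix_mul_assoc)
qed

lemma invertible_conj_iff:
  fixes a g :: "'a::field^'m^'m"
  assumes "invertible a"
  shows "invertible (matrix_inv a ** g ** a) \<longleftrightarrow> invertible g"
proof
  assume H: "invertible g"
  show "invertible (matrix_inv a ** g ** a)"
    by (rule invertible_mult[OF invertible_mult[OF invertible_minv[OF assms] H] assms])
next
  assume H: "invertible (matrix_inv a ** g ** a)"
  have "invertible (a ** (matrix_inv a ** g ** a) ** matrix_inv a)"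
    by (rule invertible_mult[OF invertible_mult[OF assms H] invertible_minv[OF assms]])
  then show "invertible g" using conj_cancel1[OF assms] by simp
qed

lemma unconj_conj:
  assumes y: "y \<in> GLset"
  shows "unconjy y (conjy y x) = x" "conjy y (unconjy y x) = x"
proof -
  obtain a b c where yy: "y = (a,b,c)" by (cases y) auto
  obtain g h k where xx: "x = (g,h,k)" by (cases x) auto
  have i: "invertible a" "invertible b" "invertible c" using y yy by (auto simp: GLset_def)
  show "unconjy y (conjy y x) = x" "conjy y (unconjy y x) = x"
    using i by (simp_all add: yy xx conjy_def unconjy_def conj_cancel1 conj_cancel2)
qed

lemma stab_orbit_iff:
  fixes T :: "'n::finite tensor"
  assumes y: "y \<in> GLset"
  shows "x \<in> stab (act y T) \<longleftrightarrow> unconjy y x \<in> stab T"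
proof -
  obtain a b c where yy: "y = (a,b,c)" by (cases y) auto
  obtain g h k where xx: "x = (g,h,k)" by (cases x) auto
  have i: "invertible a" "invertible b" "invertible c" using y yy by (auto simp: GLset_def)
  define G where "G = matrix_inv a ** g ** a"
  define Hh where "Hh = matrix_inv b ** h ** b"
  define K where "K = matrix_inv c ** k ** c"
  have ux: "unconjy (a,b,c) (g,h,k) = (G, Hh, K)" by (simp add: unconjy_def G_def Hh_def K_def)
  have gl: "(g,h,k) \<in> GLset \<longleftrightarrow> (G,Hh,K) \<in> GLset"
    unfolding GLset_def G_def Hh_def K_def using invertible_conj_iff[OF i(1)] invertible_conj_iff[OF i(2)]
      invertible_conj_iff[OF i(3)] by auto
  have ga: "g ** a = a ** G" using conj_cancel1[OF i(1), of g] i(1)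
    by (simp add: G_def matrix_mul_assoc inv_r)
  have hb: "h ** b = b ** Hh" using i(2)
    by (simp add: Hh_def matrix_mul_assoc inv_r)
  have kc: "k ** c = c ** K" using i(3)
    by (simp add: K_def matrix_mul_assoc inv_r)
  have ga': "G = matrix_inv a ** (g ** a)" by (simp add: G_def matrix_mul_assoc)
  have hb': "Hh = matrix_inv b ** (h ** b)" by (simp add: Hh_def matrix_mul_assoc)
  have kc': "K = matrix_inv c ** (k ** c)" by (simp add: K_def matrix_mul_assoc)
  have eq1: "act (g,h,k) (act (a,b,c) T) = act (a,b,c) (act (G,Hh,K) T)"
    by (simp add: act_mult[symmetric] ga hb kc)
  have eq2: "act (G,Hh,K) T = act (matrix_inv a, matrix_inv b, matrix_inv c) (act (g,h,k) (act (a,b,c) T))"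
    by (simp add: act_mult[symmetric] ga' hb' kc')
  have eq3: "act (matrix_inv a, matrix_inv b, matrix_inv c) (act (a,b,c) T) = T"
    by (simp add: act_mult[symmetric] inv_l i)
  have "act (g,h,k) (act (a,b,c) T) = act (a,b,c) T \<longleftrightarrow> act (G,Hh,K) T = T"
  proof
    assume "act (g,h,k) (act (a,b,c) T) = act (a,b,c) T"
    then show "act (G,Hh,K) T = T" using eq2 eq3 by simp
  next
    assume "act (G,Hh,K) T = T"
    then show "act (g,h,k) (act (a,b,c) T) = act (a,b,c) T" using eq1 by simp
  qed
  then show ?thesis using gl unfolding stab_def xx yy ux by simp
qed

lemma stab_orbit:
  fixes T :: "'n::finite tensor"
  assumes y: "y \<in> GLset"
  shows "stab (act y T) = conjy y ` stab T"
proof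
  show "stab (act y T) \<subseteq> conjy y ` stab T"
  proof
    fix x assume "x \<in> stab (act y T)"
    then have "unconjy y x \<in> stab T" using stab_orbit_iff[OF y] by blast
    then show "x \<in> conjy y ` stab T" using unconj_conj(2)[OF y, of x] by (metis image_eqI)
  qed
  show "conjy y ` stab T \<subseteq> stab (act y T)"
  proof
    fix x assume "x \<in> conjy y ` stab T"
    then obtain x0 where x0: "x0 \<in> stab T" "x = conjy y x0" by blast
    have "unconjy y x \<in> stab T" using x0 unconj_conj(1)[OF y, of x0] by simp
    then show "x \<in> stab (act y T)" using stab_orbit_iff[OF y, of x T] by blast
  qed
qed

lemma cont_lr:
  fixes A B :: "complex^'m::finite^'m"
  shows "continuous_on S (\<lambda>M. A ** M ** B)"
  unfolding matrix_matrix_mult_def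
  by (intro continuous_intros)

lemma cont_conjy: "continuous_on S (conjy (y :: 'n::finite glelem))"
proof -
  obtain a b c where yy: "y = (a,b,c)" by (cases y) auto
  have "conjy y = (\<lambda>x. (a ** fst x ** matrix_inv a, b ** fst (snd x) ** matrix_inv b, c ** snd (snd x) ** matrix_inv c))"
    by (auto simp: conjy_def yy split: prod.splits)
  moreover have "continuous_on S (\<lambda>x::'n glelem. (a ** fst x ** matrix_inv a, b ** fst (snd x) ** matrix_inv b, c ** snd (snd x) ** matrix_inv c))"
    by (intro continuous_on_Pair continuous_on_compose2[OF cont_lr[of UNIV]] continuous_intros) auto
  ultimately show ?thesis by simp
qed

lemma cont_unconjy: "continuous_on S (unconjy (y :: 'n::finite glelem))"
proof -
  obtain a b c where yy: "y = (a,b,c)" by (cases y) auto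
  have "unconjy y = (\<lambda>x. (matrix_inv a ** fst x ** a, matrix_inv b ** fst (snd x) ** b, matrix_inv c ** snd (snd x) ** c))"
    by (auto simp: unconjy_def yy split: prod.splits)
  moreover have "continuous_on S (\<lambda>x::'n glelem. (matrix_inv a ** fst x ** a, matrix_inv b ** fst (snd x) ** b, matrix_inv c ** snd (snd x) ** c))"
    by (intro continuous_on_Pair continuous_on_compose2[OF cont_lr[of UNIV]] continuous_intros) auto
  ultimately show ?thesis by simp
qed

lemma connected_orbit:
  fixes T :: "'n::finite tensor"
  assumes y: "y \<in> GLset" and c: "connected (stab T)"
  shows "connected (stab (act y T))"
  unfolding stab_orbit[OF y] by (rule connected_continuous_image[OF cont_conjy c])

lemma stab_group_carrier[simp]: "carrier (stab_group T) = stab T"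
  by (simp add: stab_group_def)
lemma stab_group_one[simp]: "one (stab_group T) = (mat 1, mat 1, mat 1)"
  by (simp add: stab_group_def)
lemma stab_group_mult[simp]: "mult (stab_group T) (g,h,k) (g',h',k') = (g ** g', h ** h', k ** k')"
  by (simp add: stab_group_def)

lemma stab_group_group:
  fixes T :: "'n::finite tensor"
  shows "group (stab_group T)"
proof (rule groupI)
  fix x y assume "x \<in> carrier (stab_group T)" "y \<in> carrier (stab_group T)"
  then show "x \<otimes>\<^bsub>stab_group T\<^esub> y \<in> carrier (stab_group T)"
    by (cases x, cases y) (auto simp: stab_def GLset_def invertible_mult act_mult)
next
  show "\<one>\<^bsub>stab_group T\<^esub> \<in> carrier (stab_group T)"
    by (simp add: stab_def GLset_def invertible_def)
next
  fix x y z assume "x \<in> carrier (stab_group T)" "y \<in> carrier (stab_group T)" "z \<in> carrier (stab_group T)"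
  then show "x \<otimes>\<^bsub>stab_group T\<^esub> y \<otimes>\<^bsub>stab_group T\<^esub> z = x \<otimes>\<^bsub>stab_group T\<^esub> (y \<otimes>\<^bsub>stab_group T\<^esub> z)"
    by (cases x, cases y, cases z) (simp add: matrix_mul_assoc)
next
  fix x assume "x \<in> carrier (stab_group T)"
  then show "\<one>\<^bsub>stab_group T\<^esub> \<otimes>\<^bsub>stab_group T\<^esub> x = x" by (cases x) simp
next
  fix x assume xc: "x \<in> carrier (stab_group T)"
  obtain g h k where xx: "x = (g,h,k)" by (cases x) auto
  have i: "invertible g" "invertible h" "invertible k" and ax: "act (g,h,k) T = T"
    using xc xx by (auto simp: stab_def GLset_def)
  have "act (matrix_inv g, matrix_inv h, matrix_inv k) T = act (matrix_inv g, matrix_inv h, matrix_inv k) (act (g,h,k) T)"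
    using ax by simp
  also have "\<dots> = T" by (simp add: act_mult[symmetric] inv_l i)
  finally have "(matrix_inv g, matrix_inv h, matrix_inv k) \<in> carrier (stab_group T)"
    using i by (simp add: stab_def GLset_def invertible_minv)
  moreover have "(matrix_inv g, matrix_inv h, matrix_inv k) \<otimes>\<^bsub>stab_group T\<^esub> x = \<one>\<^bsub>stab_group T\<^esub>"
    using i by (simp add: xx inv_l)
  ultimately show "\<exists>y\<in>carrier (stab_group T). y \<otimes>\<^bsub>stab_group T\<^esub> x = \<one>\<^bsub>stab_group T\<^esub>" by blast
qed

lemma unconjy_mult:
  assumes y: "y \<in> GLset"
  shows "unconjy y ((g,h,k) \<otimes>\<^bsub>stab_group T\<^esub> (g',h',k')) = 
    (fst (unconjy y (g,h,k)) ** fst (unconjy y (g',h',k')), fst (snd (unconjy y (g,h,k))) ** fst (snd (unconjy y (g',h',k'))),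
     snd (snd (unconjy y (g,h,k))) ** snd (snd (unconjy y (g',h',k'))))"
proof -
  obtain a b c where yy: "y = (a,b,c)" by (cases y) auto
  have i: "invertible a" "invertible b" "invertible c" using y yy by (auto simp: GLset_def)
  show ?thesis using i by (simp add: yy unconjy_def conj_mult)
qed




lemma unconjy_one:
  assumes y: "y \<in> GLset"
  shows "unconjy y (mat 1, mat 1, mat 1) = (mat 1, mat 1, mat 1)"
proof -
  obtain a b c where yy: "y = (a,b,c)" by (cases y) auto
  have i: "invertible a" "invertible b" "invertible c" using y yy by (auto simp: GLset_def)
  show ?thesis using i by (simp add: yy unconjy_def inv_l)
qed

lemma O6_quot:
  fixes p q :: "'n::finite" and y :: "'n glelem"
  assumes pq: "p \<noteq> q" and y: "y \<in> GLset"
  shows "stab_group (act y (sum_pure [(0,0,p),(1,1,q)])) Mod identity_component (stab (act y (sum_pure [(0,0,p),(1,1,q)])))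
           \<cong> integer_mod_group 2"
proof -
  define T where "T = (sum_pure [(0,0,p),(1,1,q)] :: 'n tensor)"
  define G where "G = stab_group (act y T)"
  define H where "H = stab (act y T)"
  define Z where "Z = integer_mod_group 2"
  define g0 where "g0 = (\<lambda>x. fst (unconjy y x))"
  define \<psi> where "\<psi> = (\<lambda>x. if g0 x $ 0 $ 1 = 0 then 0 else (1::int))"
  define e where "e = ((mat 1, mat 1, mat 1) :: 'n glelem)"
  have memb: "x \<in> H \<longleftrightarrow> unconjy y x \<in> stab T" for x unfolding H_def by (rule stab_orbit_iff[OF y])
  have tyx: "(g0 x $0$1 = 0 \<and> g0 x $1$0 = 0 \<and> g0 x $0$0 \<noteq> 0 \<and> g0 x $1$1 \<noteq> 0
               \<and> Qd (inv2 (g0 x)) (inv2 (fst (snd (unconjy y x)))))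
     \<or> (g0 x $0$0 = 0 \<and> g0 x $1$1 = 0 \<and> g0 x $0$1 \<noteq> 0 \<and> g0 x $1$0 \<noteq> 0
               \<and> \<not> Qd (inv2 (g0 x)) (inv2 (fst (snd (unconjy y x)))))" if xH: "x \<in> H" for x
  proof -
    obtain g h k where u: "unconjy y x = (g,h,k)" by (cases "unconjy y x") auto
    have st: "(g,h,k) \<in> stab T" using memb xH u by simp
    have dg: "det g \<noteq> 0" using st by simp
    show ?thesis using O6_types[OF pq st[unfolded T_def]] dg by (auto simp: g0_def u det2)
  qed
  have eH: "e \<in> H" by (simp add: H_def e_def)
  have g0e: "g0 e = mat 1" by (simp add: g0_def e_def unconjy_one[OF y])
  have grG: "group G" unfolding G_def by (rule stab_group_group)
  have grZ: "group Z" unfolding Z_def by simp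
  have hom: "\<psi> \<in> hom G Z"
  proof (rule homI)
    fix x assume "x \<in> carrier G"
    show "\<psi> x \<in> carrier Z" by (simp add: \<psi>_def Z_def carrier_integer_mod_group)
  next
    fix x x' assume xG: "x \<in> carrier G" and x'G: "x' \<in> carrier G"
    obtain g h k where xx: "x = (g,h,k)" by (cases x) auto
    obtain g' h' k' where xx': "x' = (g',h',k')" by (cases x') auto
    have xH: "x \<in> H" and x'H: "x' \<in> H" using xG x'G by (simp_all add: G_def H_def)
    have m: "g0 (x \<otimes>\<^bsub>G\<^esub> x') = g0 x ** g0 x'"
      unfolding G_def g0_def xx xx' unconjy_mult[OF y] by simp
    have e01: "g0 (x \<otimes>\<^bsub>G\<^esub> x') $ 0 $ 1 = g0 x $0$0 * g0 x' $0$1 + g0 x $0$1 * g0 x' $1$1"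
      unfolding m mult2_entries ..
    show "\<psi> (x \<otimes>\<^bsub>G\<^esub> x') = \<psi> x \<otimes>\<^bsub>Z\<^esub> \<psi> x'"
      using tyx[OF xH] tyx[OF x'H] unfolding \<psi>_def Z_def e01 by auto
  qed
  have gh: "group_hom G Z \<psi>"
    unfolding group_hom_def group_hom_axioms_def using grG grZ hom by simp
  define s where "s = conjy y (mk2 0 1 1 0, mk2 0 1 1 0, kswap p q)"
  have us: "unconjy y s = (mk2 0 1 1 0, mk2 0 1 1 0, kswap p q)" by (simp add: s_def unconj_conj(1)[OF y])
  have sH: "s \<in> H" using memb us swap_in_stab6[OF pq] by (simp add: T_def)
  have surj: "\<psi> ` carrier G = carrier Z"
  proof
    show "\<psi> ` carrier G \<subseteq> carrier Z" by (auto simp: \<psi>_def Z_def carrier_integer_mod_group)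
    have "\<psi> e = 0" by (simp add: \<psi>_def g0e)
    moreover have "\<psi> s = 1" by (simp add: \<psi>_def g0_def us)
    ultimately show "carrier Z \<subseteq> \<psi> ` carrier G" using eH sH
      by (auto simp: Z_def carrier_integer_mod_group G_def H_def image_iff)
         (metis (full_types) atLeastLessThan_iff int_one_le_iff_zero_less less_le not_less order_class.order_eq_iff zero_less_one_class.zero_le_one
           zless_add1_eq one_add_one)
  qed
  have ker: "kernel G Z \<psi> = {x \<in> H. g0 x $ 0 $ 1 = 0}"
    by (auto simp: kernel_def G_def H_def Z_def \<psi>_def)
  define Hd where "Hd = {x0 \<in> stab T. Qd (inv2 (fst x0)) (inv2 (fst (snd x0)))}"
  have KerHd: "{x \<in> H. g0 x $ 0 $ 1 = 0} = conjy y ` Hd"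
  proof
    show "{x \<in> H. g0 x $ 0 $ 1 = 0} \<subseteq> conjy y ` Hd"
    proof
      fix x assume "x \<in> {x \<in> H. g0 x $ 0 $ 1 = 0}"
      then have xH: "x \<in> H" and z: "g0 x $ 0 $ 1 = 0" by auto
      have "unconjy y x \<in> Hd" using memb[of x] xH tyx[OF xH] z by (auto simp: Hd_def g0_def)
      then show "x \<in> conjy y ` Hd" using unconj_conj(2)[OF y, of x] by (metis image_eqI)
    qed
    show "conjy y ` Hd \<subseteq> {x \<in> H. g0 x $ 0 $ 1 = 0}"
    proof
      fix x assume "x \<in> conjy y ` Hd"
      then obtain x0 where x0: "x0 \<in> Hd" "x = conjy y x0" by blast
      have ux: "unconjy y x = x0" using x0 unconj_conj(1)[OF y] by simp
      have xH: "x \<in> H" using memb[of x] ux x0 by (simp add: Hd_def)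
      have "Qd (inv2 (g0 x)) (inv2 (fst (snd (unconjy y x))))" using ux x0 by (simp add: Hd_def g0_def)
      then show "x \<in> {x \<in> H. g0 x $ 0 $ 1 = 0}" using tyx[OF xH] xH by auto
    qed
  qed
  have connKer: "connected {x \<in> H. g0 x $ 0 $ 1 = 0}"
    unfolding KerHd Hd_def T_def
    by (rule connected_continuous_image[OF cont_conjy conn_O6d[OF pq]])
  have cg0: "continuous_on UNIV (\<lambda>x. g0 x $ i $ j)" for i j
    unfolding g0_def by (intro continuous_on_component continuous_on_fst cont_unconjy)
  have idc: "identity_component H = {x \<in> H. g0 x $ 0 $ 1 = 0}"
  proof
    define C where "C = connected_component_set H e"
    have C: "identity_component H = C" by (simp add: C_def identity_component_def e_def)
    show "{x \<in> H. g0 x $ 0 $ 1 = 0} \<subseteq> identity_component H"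
      unfolding C C_def
      by (rule connected_component_maximal) (use eH g0e connKer in auto)
    have cC: "connected C" unfolding C_def by (rule connected_connected_component)
    have CH: "C \<subseteq> H" unfolding C_def by (rule connected_component_subset)
    have eC: "e \<in> C" unfolding C_def using eH by simp
    define E1 where "E1 = {x. g0 x $ 0 $ 1 = 0}"
    define E2 where "E2 = {x. g0 x $ 0 $ 0 = 0}"
    have cl1: "closed E1" unfolding E1_def by (rule closed_Collect_eq[OF cg0 continuous_on_const])
    have cl2: "closed E2" unfolding E2_def by (rule closed_Collect_eq[OF cg0 continuous_on_const])
    have cov: "C \<subseteq> E1 \<union> E2" using CH tyx unfolding E1_def E2_def by blast
    have disj: "E1 \<inter> E2 \<inter> C = {}" using CH tyx unfolding E1_def E2_def by blast
    have e01: "g0 e $ 0 $ 1 = 0" by (simp add: g0e)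
    have ne: "E1 \<inter> C \<noteq> {}" using eC e01 unfolding E1_def by blast
    have "E2 \<inter> C = {}" using cC[unfolded connected_closed] cl1 cl2 cov disj ne by blast
    then show "identity_component H \<subseteq> {x \<in> H. g0 x $ 0 $ 1 = 0}"
      unfolding C using cov CH unfolding E1_def E2_def by blast
  qed
  have "G Mod kernel G Z \<psi> \<cong> Z" by (rule group_hom.FactGroup_iso[OF gh surj])
  then show ?thesis unfolding ker idc[symmetric] by (simp add: G_def H_def Z_def T_def)
qed




theorem proposition3p1:
  fixes c :: "nat \<Rightarrow> 'n::finite"
  assumes "CARD('n) \<ge> 3"
    and "bij_betw c {1..CARD('n)} UNIV"
  shows "(\<forall>v \<in> GL_orbit (rep c 6).
            stab_group v Mod identity_component (stab v) \<cong> integer_mod_group 2)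
       \<and> (\<forall>m \<in> {0..9} - {6::nat}. (m = 9 \<longrightarrow> CARD('n) \<ge> 4) \<longrightarrow>
            (\<forall>v \<in> GL_orbit (rep c m). connected (stab v)))"
proof -
  have inj: "inj_on c {1..CARD('n)}" using assms(2) by (rule bij_betw_imp_inj_on)
  have dc: "c i \<noteq> c j" if "i \<noteq> j" "1 \<le> i" "i \<le> CARD('n)" "1 \<le> j" "j \<le> CARD('n)" for i j
    using inj_onD[OF inj, of i j] that by auto
  have d12: "c 1 \<noteq> c 2" using dc[of 1 2] assms(1) by simp
  have d13: "c 1 \<noteq> c 3" using dc[of 1 3] assms(1) by simp
  have d23: "c 2 \<noteq> c 3" using dc[of 2 3] assms(1) by simp
  have part1: "\<forall>v \<in> GL_orbit (rep c 6). stab_group v Mod identity_component (stab v) \<cong> integer_mod_group 2"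
  proof
    fix v assume "v \<in> GL_orbit (rep c 6)"
    then obtain y where y: "y \<in> GLset" "v = act y (rep c 6)" unfolding GL_orbit_def by blast
    have r: "rep c 6 = sum_pure [(0,0,c 1),(1,1,c 2)]" by (simp add: rep_def)
    show "stab_group v Mod identity_component (stab v) \<cong> integer_mod_group 2"
      using O6_quot[OF d12 y(1)] y(2) r by simp
  qed
  have part2: "connected (stab v)" if m: "m \<in> {0..9} - {6::nat}" and m9: "m = 9 \<longrightarrow> CARD('n) \<ge> 4"
    and v: "v \<in> GL_orbit (rep c m)" for m v
  proof -
    obtain y where y: "y \<in> GLset" "v = act y (rep c m)" using v unfolding GL_orbit_def by blast
    have "connected (stab (rep c m))"
    proof -
      have "m = 0 \<or> m = 1 \<or> m = 2 \<or> m = 3 \<or> m = 4 \<or> m = 5 \<or> m = 7 \<or> m = 8 \<or> m = 9" using m by auto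
      then show ?thesis
      proof (elim disjE)
        assume "m = 0" then show ?thesis using conn_O0 by (simp add: rep_def)
      next
        assume "m = 1" then show ?thesis using conn_O1 by (simp add: rep_def)
      next
        assume "m = 2" then show ?thesis using conn_O2 by (simp add: rep_def)
      next
        assume "m = 3" then show ?thesis using conn_O3[OF d12] by (simp add: rep_def)
      next
        assume "m = 4" then show ?thesis using conn_O4[OF d12] by (simp add: rep_def)
      next
        assume "m = 5" then show ?thesis using conn_O5[OF d12] by (simp add: rep_def)
      next
        assume "m = 7" then show ?thesis using conn_O7[OF d12 d13 d23] by (simp add: rep_def)
      next
        assume "m = 8" then show ?thesis using conn_O8[OF d12 d13 d23] by (simp add: rep_def)
      next
        assume m9': "m = 9"
        then have c4: "CARD('n) \<ge> 4" using m9 by simp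
        have d: "c 1 \<noteq> c 4" "c 2 \<noteq> c 4" "c 3 \<noteq> c 4"
          using dc[of 1 4] dc[of 2 4] dc[of 3 4] c4 by simp_all
        show ?thesis using conn_O9[OF d12 d13 d23 d] m9' by (simp add: rep_def)
      qed
    qed
    then show ?thesis using connected_orbit[OF y(1)] y(2) by simp
  qed
  show ?thesis using part1 part2 by blast
qed


end
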